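(* Let $m\ge 1$ and let $\{S_n\}$ be a $\bmod m$ random walk on $\mathbb{Z}$ with parameters $\mathbf{p}=(p_0,\dots,p_{m-1})$, $\mathbf{q}=(q_0,\dots,q_{m-1})$ satisfying $p_iq_i\neq 0$ for $i=0,1,\dots,m-1$. Let $p^\ast_m$ be the probability that the walk started at $S_0=0$ reaches $m$ before it reaches $-m$. Then \[ p^\ast_m=\frac{p_0p_1\cdots p_{m-1}}{p_0p_1\cdots p_{m-1}+q_0q_1\cdots q_{m-1}}=\frac{\rho_m}{1+\rho_m},\qquad \rho_m:=\frac{p_0p_1\cdots p_{m-1}}{q_0q_1\cdots q_{m-1}} . \]
   Context: A random walk on $\mathbb{Z}$ here is a time-homogeneous Markov chain $\{S_n\}$ on $\mathbb{Z}$ with $S_{n+1}-S_n\in\{-1,0,1\}$ a.s., with $p_j=P(S_{n+1}-S_n=1\mid S_n=j)$, $q_j=P(S_{n+1}-S_n=-1\mid S_n=j)$, $r_j=1-p_j-q_j$. It is a $\bmod m$ random walk (denoted $G(m,\mathbf{p},\mathbf{q})$) if $p_j=p_{j+m}$, $q_j=q_{j+m}$ for all $j\in\mathbb{Z}$. The quantity $p^\ast_m$ is the constant up-step probability of the embedded simple random walk of $\{S_n\}$ on the lattice $m\mathbb{Z}$. *)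

theory Defs
  imports Complex_Main
begin

text \<open>Nearest-neighbour walk on the integers with up-probabilities p j and
down-probabilities q j (holding probability 1 - p j - q j).
hit_before p q a b n j is the probability that the walk started at j
reaches a before it reaches b within at most n steps (a and b absorbing).\<close>

fun hit_before :: "(int \<Rightarrow> real) \<Rightarrow> (int \<Rightarrow> real) \<Rightarrow> int \<Rightarrow> int \<Rightarrow> nat \<Rightarrow> int \<Rightarrow> real" where
  "hit_before p q a b 0 j = (if j = a then 1 else 0)"
| "hit_before p q a b (Suc n) j =
     (if j = a then 1 else if j = b then 0
      else p j * hit_before p q a b n (j + 1)
         + q j * hit_before p q a b n (j - 1)
         + (1 - p j - q j) * hit_before p q a b n j)"

text \<open>Probability of ever reaching a before b, starting from j: the limit of
the finite-horizon probabilities (a nondecreasing bounded sequence).\<close>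

definition hit_prob :: "(int \<Rightarrow> real) \<Rightarrow> (int \<Rightarrow> real) \<Rightarrow> int \<Rightarrow> int \<Rightarrow> int \<Rightarrow> real" where
  "hit_prob p q a b j = lim (\<lambda>n. hit_before p q a b n j)"

definition mod_walk :: "nat \<Rightarrow> (int \<Rightarrow> real) \<Rightarrow> (int \<Rightarrow> real) \<Rightarrow> bool" where
  "mod_walk m p q \<longleftrightarrow> m \<ge> 1 \<and>
     (\<forall>j. p j \<ge> 0 \<and> q j \<ge> 0 \<and> p j + q j \<le> 1) \<and>
     (\<forall>j. p (j + int m) = p j \<and> q (j + int m) = q j)"

end

theory Submission
  imports Defs
begin

lemma hb_bounds:
  assumes "\<And>j. p j \<ge> 0 \<and> q j \<ge> 0 \<and> p j + q j \<le> 1"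
  shows "0 \<le> hit_before p q a b n j \<and> hit_before p q a b n j \<le> 1"
proof (induction n arbitrary: j)
  case 0 then show ?case by simp
next
  case (Suc n)
  have A: "p j \<ge> 0" "q j \<ge> 0" "1 - p j - q j \<ge> 0" using assms[of j] by auto
  let ?x = "hit_before p q a b n (j+1)" and ?y = "hit_before p q a b n (j-1)"
    and ?z = "hit_before p q a b n j"
  have B: "0 \<le> ?x" "?x \<le> 1" "0 \<le> ?y" "?y \<le> 1" "0 \<le> ?z" "?z \<le> 1" using Suc by auto
  have "0 \<le> p j * ?x + q j * ?y + (1 - p j - q j) * ?z"
    using A B by (intro add_nonneg_nonneg mult_nonneg_nonneg) auto
  moreover have "p j * ?x + q j * ?y + (1 - p j - q j) * ?z \<le> p j * 1 + q j * 1 + (1 - p j - q j) * 1"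
    using A B by (intro add_mono mult_left_mono) auto
  ultimately show ?case by auto
qed

lemma hb_mono:
  assumes "\<And>j. p j \<ge> 0 \<and> q j \<ge> 0 \<and> p j + q j \<le> 1"
  shows "hit_before p q a b n j \<le> hit_before p q a b (Suc n) j"
proof (induction n arbitrary: j)
  case 0
  have "0 \<le> hit_before p q a b (Suc 0) j" using hb_bounds[of p q, OF assms] by blast
  then show ?case by auto
next
  case (Suc n)
  have A: "p j \<ge> 0" "q j \<ge> 0" "1 - p j - q j \<ge> 0" using assms[of j] by auto
  have "p j * hit_before p q a b n (j+1) + q j * hit_before p q a b n (j-1)
        + (1 - p j - q j) * hit_before p q a b n j
     \<le> p j * hit_before p q a b (Suc n) (j+1) + q j * hit_before p q a b (Suc n) (j-1)
        + (1 - p j - q j) * hit_before p q a b (Suc n) j"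
    using A Suc by (intro add_mono mult_left_mono) auto
  then show ?case by (simp only: hit_before.simps) auto
qed

lemma hb_conv:
  assumes "\<And>j. p j \<ge> 0 \<and> q j \<ge> 0 \<and> p j + q j \<le> 1"
  shows "convergent (\<lambda>n. hit_before p q a b n j)"
proof (rule Bseq_mono_convergent)
  show "Bseq (\<lambda>n. hit_before p q a b n j)"
    using hb_bounds[of p q, OF assms] by (intro BseqI'[of _ 1]) auto
  have "incseq (\<lambda>n. hit_before p q a b n j)"
    by (rule incseq_SucI) (rule hb_mono[of p q, OF assms])
  then show "\<forall>m n. m \<le> n \<longrightarrow> hit_before p q a b m j \<le> hit_before p q a b n j"
    by (auto dest: incseqD)
qed

lemma periodic_shift:
  fixes f :: "int \<Rightarrow> 'a"
  assumes "\<And>j. f (j + int m) = f j"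
  shows "f (j + k * int m) = f j"
proof (induction k rule: int_induct[where k=0])
  case base then show ?case by simp
next
  case (step1 i) then show ?case using assms[of "j + i * int m"] by (simp add: algebra_simps)
next
  case (step2 i) then show ?case using assms[of "j + (i - 1) * int m"] by (simp add: algebra_simps)
qed

lemma periodic_mod:
  fixes f :: "int \<Rightarrow> 'a"
  assumes "\<And>j. f (j + int m) = f j"
  shows "f j = f (j mod int m)"
  using periodic_shift[where f=f and m=m, OF assms, of "j mod int m" "j div int m"]
  by (metis add.commute mult.commute div_mult_mod_eq)

lemma periodic_prod:
  fixes f :: "int \<Rightarrow> real"
  assumes "\<And>j. f (j + int m) = f j" and "\<And>j. f j \<noteq> 0"
  shows "(\<Prod>l<m. f (a + int l)) = (\<Prod>l<m. f (int l))"
proof -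
  define G where "G a = (\<Prod>l<m. f (a + int l))" for a
  have step: "G (a + 1) = G a" for a
  proof -
    have "f a * G (a+1) = (\<Prod>l<Suc m. f (a + int l))"
      unfolding G_def by (subst prod.lessThan_Suc_shift) (simp add: algebra_simps)
    also have "\<dots> = G a * f (a + int m)"
      unfolding G_def by simp
    also have "\<dots> = G a * f a" using assms(1) by simp
    finally show ?thesis using assms(2)[of a] by (simp add: mult.commute)
  qed
  have "G a = G 0"
  proof (induction a rule: int_induct[where k=0])
    case base then show ?case by simp
  next
    case (step1 i) then show ?case using step[of i] by simp
  next
    case (step2 i) then show ?case using step[of "i - 1"] by simp
  qed
  then show ?thesis unfolding G_def by simp
qed

theorem lemma3p2:
  fixes m :: nat and p q :: "int \<Rightarrow> real"
  assumes "m \<ge> 1"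
    and "mod_walk m p q"
    and "\<And>i. i < m \<Longrightarrow> p (int i) * q (int i) \<noteq> 0"
  defines "\<rho> \<equiv> (\<Prod>i<m. p (int i)) / (\<Prod>i<m. q (int i))"
  shows "convergent (\<lambda>n. hit_before p q (int m) (- int m) n 0)
    \<and> hit_prob p q (int m) (- int m) 0
        = (\<Prod>i<m. p (int i)) / ((\<Prod>i<m. p (int i)) + (\<Prod>i<m. q (int i)))
    \<and> hit_prob p q (int m) (- int m) 0 = \<rho> / (1 + \<rho>)"
proof -
  have nn: "\<And>j. p j \<ge> 0 \<and> q j \<ge> 0 \<and> p j + q j \<le> 1"
    and perp: "\<And>j. p (j + int m) = p j" and perq: "\<And>j. q (j + int m) = q j"
    using assms(2) unfolding mod_walk_def by auto
  have nz: "p j \<noteq> 0 \<and> q j \<noteq> 0" for j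
  proof -
    have h0: "0 \<le> j mod int m" "j mod int m < int m" using assms(1) by auto
    define i where "i = nat (j mod int m)"
    have i: "i < m" "j mod int m = int i" using h0 unfolding i_def by auto
    have ep: "p j = p (int i)" using periodic_mod[of p m, OF perp, of j] i(2) by simp
    have eq: "q j = q (int i)" using periodic_mod[of q m, OF perq, of j] i(2) by simp
    show ?thesis using assms(3)[OF i(1)] ep eq by simp
  qed
  define a where "a = int m"
  define b where "b = - int m"
  define L where "L j = lim (\<lambda>n. hit_before p q a b n j)" for j
  have conv: "(\<lambda>n. hit_before p q a b n j) \<longlonglongrightarrow> L j" for j
    unfolding L_def using hb_conv[of p q, OF nn] convergent_LIMSEQ_iff by blast
  have La: "L a = 1"
  proof -
    have "hit_before p q a b n a = 1" for n by (cases n) auto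
    then show ?thesis unfolding L_def by simp
  qed
  have Lb: "L b = 0"
  proof -
    have "a \<noteq> b" using assms(1) unfolding a_def b_def by simp
    then have "hit_before p q a b n b = 0" for n by (cases n) auto
    then show ?thesis unfolding L_def by simp
  qed
  have harm: "p j * (L (j+1) - L j) = q j * (L j - L (j - 1))" if "b < j" "j < a" for j
  proof -
    have "(\<lambda>n. hit_before p q a b (Suc n) j) \<longlonglongrightarrow> L j"
      using conv[of j] by (rule LIMSEQ_Suc)
    moreover have "(\<lambda>n. hit_before p q a b (Suc n) j) =
      (\<lambda>n. p j * hit_before p q a b n (j + 1) + q j * hit_before p q a b n (j - 1)
         + (1 - p j - q j) * hit_before p q a b n j)"
      using that by auto
    moreover have "(\<lambda>n. p j * hit_before p q a b n (j + 1) + q j * hit_before p q a b n (j - 1)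
         + (1 - p j - q j) * hit_before p q a b n j) \<longlonglongrightarrow>
         p j * L (j+1) + q j * L (j - 1) + (1 - p j - q j) * L j"
      by (intro tendsto_intros conv)
    ultimately have "L j = p j * L (j+1) + q j * L (j - 1) + (1 - p j - q j) * L j"
      using LIMSEQ_unique by metis
    then show ?thesis by (simp add: algebra_simps)
  qed
  define d where "d j = L (j+1) - L j" for j
  define P where "P = (\<Prod>i<m. p (int i))"
  define Q where "Q = (\<Prod>i<m. q (int i))"
  have chain: "d (j - int m + int k) * (\<Prod>l<k. p (j - int m + 1 + int l))
       = d (j - int m) * (\<Prod>l<k. q (j - int m + 1 + int l))"
    if "0 \<le> j" "j < int m" "k \<le> m" for j k
    using that(3)
  proof (induction k)
    case 0 then show ?case by simp
  next
    case (Suc k)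
    let ?t = "j - int m + 1 + int k"
    have h0: "p ?t * (L (?t+1) - L ?t) = q ?t * (L ?t - L (?t - 1))"
      using Suc.prems that by (intro harm) (auto simp: a_def b_def)
    have h: "p ?t * d ?t = q ?t * d (?t - 1)"
      using h0 by (simp only: d_def diff_add_cancel)
    have "d (j - int m + int (Suc k)) * (\<Prod>l<Suc k. p (j - int m + 1 + int l))
        = (p ?t * d ?t) * (\<Prod>l<k. p (j - int m + 1 + int l))"
      by (simp add: algebra_simps)
    also have "\<dots> = q ?t * (d (j - int m + int k) * (\<Prod>l<k. p (j - int m + 1 + int l)))"
      using h by (simp add: algebra_simps)
    also have "\<dots> = q ?t * (d (j - int m) * (\<Prod>l<k. q (j - int m + 1 + int l)))"
      using Suc by simp
    also have "\<dots> = d (j - int m) * (\<Prod>l<Suc k. q (j - int m + 1 + int l))"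
      by (simp add: algebra_simps)
    finally show ?case .
  qed
  have key: "P * d (int l) = Q * d (int l - int m)" if "l < m" for l
  proof -
    have "d (int l - int m + int m) * (\<Prod>i<m. p (int l - int m + 1 + int i))
       = d (int l - int m) * (\<Prod>i<m. q (int l - int m + 1 + int i))"
      using chain[of "int l" m] that by simp
    moreover have "(\<Prod>i<m. p (int l - int m + 1 + int i)) = P"
      unfolding P_def using periodic_prod[of p m, OF perp, of "int l - int m + 1"] nz by blast
    moreover have "(\<Prod>i<m. q (int l - int m + 1 + int i)) = Q"
      unfolding Q_def using periodic_prod[of q m, OF perq, of "int l - int m + 1"] nz by blast
    ultimately show ?thesis by (simp add: mult.commute)
  qed
  have s1: "(\<Sum>l<m. d (int l)) = L a - L 0"
    using sum_lessThan_telescope[of "\<lambda>n. L (int n)" m] unfolding d_def a_def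
    by (simp add: add.commute)
  have s2: "(\<Sum>l<m. d (int l - int m)) = L 0 - L b"
    using sum_lessThan_telescope[of "\<lambda>n. L (int n - int m)" m] unfolding d_def b_def
    by (simp add: algebra_simps)
  have "P * (L a - L 0) = Q * (L 0 - L b)"
    unfolding s1[symmetric] s2[symmetric] sum_distrib_left using key by simp
  then have eq: "P * (1 - L 0) = Q * L 0" using La Lb by simp
  have Ppos: "P > 0" unfolding P_def
    using nn nz by (intro prod_pos) (metis less_eq_real_def)
  have Qpos: "Q > 0" unfolding Q_def
    using nn nz by (intro prod_pos) (metis less_eq_real_def)
  have L0: "L 0 = P / (P + Q)"
    using eq Ppos Qpos by (simp add: field_simps)
  have hp: "hit_prob p q (int m) (- int m) 0 = L 0"
    unfolding hit_prob_def L_def a_def b_def ..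
  have rho: "\<rho> / (1 + \<rho>) = P / (P + Q)"
    unfolding \<rho>_def P_def[symmetric] Q_def[symmetric] using Ppos Qpos
    by (simp add: field_simps)
  show ?thesis
    using hb_conv[of p q, OF nn] hp L0 rho unfolding P_def Q_def a_def b_def by simp
qed

end
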